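(* Let $\mathcal{I}$ be a Borel ideal on $\omega$ with $\mathrm{fin} \subseteq \mathcal{I}$. If $\mathcal{I}$ is uniformly weakly $P^+$, then $\mathcal{I}$ is uniformly weakly Ramsey.
   Context: $\mathrm{fin}$ is the ideal of finite subsets of $\omega$; $\mathcal{I}^+$ denotes subsets of $\omega$ not in $\mathcal{I}$; $A \subseteq_{\mathcal{I}} B$ means $A \setminus B \in \mathcal{I}$. $\mathcal{I}$ is uniformly weakly $P^+$ if there is a Borel function $\Phi$ such that for every $\subseteq$-decreasing sequence $\langle A_n : n\in\omega\rangle$ of $\mathcal{I}$-positive sets, $\Phi(\langle A_n\rangle) \in \mathcal{I}^+$ and $\Phi(\langle A_n\rangle) \subseteq_{\mathcal{I}} A_n$ for every $n$. For $A\subseteq\omega$, $\mathcal{I}|A = \{I \subseteq A : I\in\mathcal{I}\}$ and $(\mathcal{I}|A)^+$ is the family of subsets of $A$ not in $\mathcal{I}$. A coloring is $c : [\omega]^2 \to 2$; it is subadditive if $c(\{m,n\}) \le c(\{m,k\}) + c(\{n,k\})$ for all $m<n<k$. $H$ is 0-homogeneous for $c$ if $c(\{m,n\})=0$ for all distinct $m,n\in H$; $H$ is nowhere 0-homogeneous if every $B \in (\mathcal{I}|H)^+$ contains distinct $m,n$ with $c(\{m,n\})=1$. $\mathcal{I}$ is uniformly weakly Ramsey if there is a Borel $\Phi : [\omega]^\omega \times 2^{[\omega]^2} \to [\omega]^\omega$ such that for every $A \in \mathcal{I}^+$ and every subadditive coloring $c$, $\Phi(A,c) \in (\mathcal{I}|A)^+$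 and $\Phi(A,c)$ is 0-homogeneous or nowhere 0-homogeneous for $c$. *)

theory Defs
  imports "HOL-Analysis.Analysis"
begin

text \<open>Subsets of omega are coded by characteristic functions in the Cantor space
  nat \<Rightarrow> bool (product of discrete bool).\<close>

definition chi :: "nat set \<Rightarrow> (nat \<Rightarrow> bool)" where
  "chi A = (\<lambda>n. n \<in> A)"

definition set_of :: "(nat \<Rightarrow> bool) \<Rightarrow> nat set" where
  "set_of x = {n. x n}"

definition is_ideal :: "nat set set \<Rightarrow> bool" where
  "is_ideal I \<longleftrightarrow> (\<forall>A B. A \<in> I \<longrightarrow> B \<subseteq> A \<longrightarrow> B \<in> I)
                 \<and> (\<forall>A B. A \<in> I \<longrightarrow> B \<in> I \<longrightarrow> A \<union> B \<in> I)
                 \<and> UNIV \<notin> I"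

definition borel_ideal :: "nat set set \<Rightarrow> bool" where
  "borel_ideal I \<longleftrightarrow> is_ideal I \<and> chi ` I \<in> sets (borel :: (nat \<Rightarrow> bool) measure)"

definition fin_in :: "nat set set \<Rightarrow> bool" where
  "fin_in I \<longleftrightarrow> (\<forall>A. finite A \<longrightarrow> A \<in> I)"

definition subset_mod :: "nat set set \<Rightarrow> nat set \<Rightarrow> nat set \<Rightarrow> bool" where
  "subset_mod I A B \<longleftrightarrow> A - B \<in> I"

definition uniformly_weakly_Pplus :: "nat set set \<Rightarrow> bool" where
  "uniformly_weakly_Pplus I \<longleftrightarrow>
     (\<exists>\<Phi> :: (nat \<Rightarrow> nat \<Rightarrow> bool) \<Rightarrow> (nat \<Rightarrow> bool).
        \<Phi> \<in> borel_measurable borel \<and>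
        (\<forall>A :: nat \<Rightarrow> nat set. (\<forall>n. A n \<notin> I) \<and> (\<forall>n. A (Suc n) \<subseteq> A n) \<longrightarrow>
            set_of (\<Phi> (\<lambda>n. chi (A n))) \<notin> I \<and>
            (\<forall>n. subset_mod I (set_of (\<Phi> (\<lambda>n. chi (A n)))) (A n))))"

text \<open>Colorings c : [omega]^2 \<rightarrow> 2 are coded by c :: nat \<Rightarrow> nat \<Rightarrow> bool, where the
  colour of {m,n} with m < n is of_bool (c m n) (entries with m \<ge> n are ignored).\<close>

definition colour :: "(nat \<Rightarrow> nat \<Rightarrow> bool) \<Rightarrow> nat \<Rightarrow> nat \<Rightarrow> nat" where
  "colour c m n = (if m < n then of_bool (c m n) else of_bool (c n m))"

definition subadditive :: "(nat \<Rightarrow> nat \<Rightarrow> bool) \<Rightarrow> bool" where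
  "subadditive c \<longleftrightarrow> (\<forall>m n k. m < n \<and> n < k \<longrightarrow>
       colour c m n \<le> colour c m k + colour c n k)"

definition zero_homogeneous :: "(nat \<Rightarrow> nat \<Rightarrow> bool) \<Rightarrow> nat set \<Rightarrow> bool" where
  "zero_homogeneous c H \<longleftrightarrow> (\<forall>m\<in>H. \<forall>n\<in>H. m \<noteq> n \<longrightarrow> colour c m n = 0)"

definition nowhere_zero_homogeneous ::
    "nat set set \<Rightarrow> (nat \<Rightarrow> nat \<Rightarrow> bool) \<Rightarrow> nat set \<Rightarrow> bool" where
  "nowhere_zero_homogeneous I c H \<longleftrightarrow>
     (\<forall>B. B \<subseteq> H \<and> B \<notin> I \<longrightarrow> (\<exists>m\<in>B. \<exists>n\<in>B. m \<noteq> n \<and> colour c m n = 1))"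

definition uniformly_weakly_Ramsey :: "nat set set \<Rightarrow> bool" where
  "uniformly_weakly_Ramsey I \<longleftrightarrow>
     (\<exists>\<Phi> :: (nat \<Rightarrow> bool) \<times> (nat \<Rightarrow> nat \<Rightarrow> bool) \<Rightarrow> (nat \<Rightarrow> bool).
        \<Phi> \<in> restrict_space borel ({x. infinite (set_of x)} \<times> UNIV) \<rightarrow>\<^sub>M borel \<and>
        (\<forall>x c. infinite (set_of x) \<longrightarrow> infinite (set_of (\<Phi> (x, c)))) \<and>
        (\<forall>A c. A \<notin> I \<and> subadditive c \<longrightarrow>
            set_of (\<Phi> (chi A, c)) \<subseteq> A \<and> set_of (\<Phi> (chi A, c)) \<notin> I \<and>
            (zero_homogeneous c (set_of (\<Phi> (chi A, c))) \<or>
             nowhere_zero_homogeneous I c (set_of (\<Phi> (chi A, c))))))"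

end

theory Submission imports Defs begin

instance bool :: second_countable_topology
proof
  show "\<exists>B::bool set set. countable B \<and> open = generate_topology B"
    by (rule exI[of _ UNIV]) (auto intro!: ext generate_topology.Basis simp: open_discrete)
qed

lemma bool_borel_pred:
  "((f::'a \<Rightarrow> bool) \<in> measurable M borel) = Measurable.pred M f"
proof -
  have "measurable M (borel::bool measure) = measurable M (count_space UNIV)"
    by (rule measurable_cong_sets) (simp_all add: sets_borel_eq_count_space)
  then show ?thesis by simp
qed

lemma coord_pred:
  assumes "(f :: 'a \<Rightarrow> nat \<Rightarrow> bool) \<in> borel_measurable M"
  shows "Measurable.pred M (\<lambda>w. f w i)"
proof -
  have "(\<lambda>y::nat \<Rightarrow> bool. y i) \<in> borel_measurable borel"
    by (rule borel_measurable_continuous_onI) (rule continuous_on_product_coordinates)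
  from measurable_compose[OF assms this] show ?thesis
    by (simp add: bool_borel_pred[symmetric] o_def)
qed

lemma pred_coord:
  assumes "\<And>i. Measurable.pred M (\<lambda>w. f w i)"
  shows "(f :: 'a \<Rightarrow> nat \<Rightarrow> bool) \<in> borel_measurable M"
  by (rule measurable_coordinatewise_then_product) (use assms in \<open>simp add: bool_borel_pred\<close>)

lemma coord2:
  assumes "(f :: 'a \<Rightarrow> nat \<Rightarrow> nat \<Rightarrow> bool) \<in> borel_measurable M"
  shows "(\<lambda>w. f w i) \<in> borel_measurable M"
proof -
  have "(\<lambda>y::nat \<Rightarrow> nat \<Rightarrow> bool. y i) \<in> borel_measurable borel"
    by (rule borel_measurable_continuous_onI) (rule continuous_on_product_coordinates)
  from measurable_compose[OF assms this] show ?thesis by (simp add: o_def)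
qed

lemma fun2:
  assumes "\<And>i. (\<lambda>w. f w i) \<in> borel_measurable M"
  shows "(f :: 'a \<Rightarrow> nat \<Rightarrow> nat \<Rightarrow> bool) \<in> borel_measurable M"
  by (rule measurable_coordinatewise_then_product) (use assms in simp)

lemma set_of_chi[simp]: "set_of (chi A) = A" and chi_set_of[simp]: "chi (set_of y) = y"
  by (auto simp: set_of_def chi_def)

lemma pred_I:
  assumes "chi ` I \<in> sets borel" "(f :: 'a \<Rightarrow> nat \<Rightarrow> bool) \<in> borel_measurable M"
  shows "Measurable.pred M (\<lambda>w. set_of (f w) \<in> I)"
proof -
  have "Measurable.pred M (\<lambda>w. f w \<in> chi ` I)" by (rule pred_sets2[OF assms])
  moreover have "\<And>y. (y \<in> chi ` I) = (set_of y \<in> I)"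
    by (metis chi_set_of image_iff set_of_chi)
  ultimately show ?thesis by simp
qed

lemma pred_inf:
  assumes "(f :: 'a \<Rightarrow> nat \<Rightarrow> bool) \<in> borel_measurable M"
  shows "Measurable.pred M (\<lambda>w. infinite (set_of (f w)))"
proof -
  have [measurable]: "\<And>i. Measurable.pred M (\<lambda>w. f w i)" by (rule coord_pred[OF assms])
  have "Measurable.pred M (\<lambda>w. \<forall>n. \<exists>k. n < k \<and> f w k)" by measurable
  moreover have "\<And>w. infinite (set_of (f w)) = (\<forall>n. \<exists>k. n < k \<and> f w k)"
    by (simp add: set_of_def infinite_nat_iff_unbounded)
  ultimately show ?thesis by simp
qed

lemma fst_m: "(fst :: (nat \<Rightarrow> bool) \<times> (nat \<Rightarrow> nat \<Rightarrow> bool) \<Rightarrow> _) \<in> borel_measurable borel"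
  by (rule borel_measurable_continuous_onI) (rule continuous_on_fst[OF continuous_on_id])
lemma snd_m: "(snd :: (nat \<Rightarrow> bool) \<times> (nat \<Rightarrow> nat \<Rightarrow> bool) \<Rightarrow> _) \<in> borel_measurable borel"
  by (rule borel_measurable_continuous_onI) (rule continuous_on_snd[OF continuous_on_id])

definition inI :: "nat set set \<Rightarrow> (nat \<Rightarrow> bool) \<Rightarrow> bool" where
  "inI I y \<longleftrightarrow> set_of y \<in> I"

lemma pred_inI:
  assumes "chi ` I \<in> sets borel" "(f :: 'a \<Rightarrow> nat \<Rightarrow> bool) \<in> borel_measurable M"
  shows "Measurable.pred M (\<lambda>w. inI I (f w))"
  unfolding inI_def by (rule pred_I[OF assms])

definition Gf :: "(nat \<Rightarrow> nat \<Rightarrow> bool) \<Rightarrow> nat \<Rightarrow> nat \<Rightarrow> bool" where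
  "Gf c n k \<longleftrightarrow> n < k \<and> \<not> c n k"

primrec Cs :: "nat set set \<Rightarrow> (nat \<Rightarrow> bool) \<Rightarrow> (nat \<Rightarrow> nat \<Rightarrow> bool) \<Rightarrow> nat \<Rightarrow> nat \<Rightarrow> bool" where
  "Cs I x c 0 = x"
| "Cs I x c (Suc n) = (\<lambda>k. if \<not> inI I (\<lambda>k. Cs I x c n k \<and> Gf c n k)
      then Cs I x c n k \<and> Gf c n k else Cs I x c n k \<and> \<not> Gf c n k)"

definition Xf where "Xf P I x c = (\<lambda>k. P (Cs I x c) k \<and> x k)"
definition Sf where "Sf P I x c = (\<lambda>k. x k \<and> inI I (\<lambda>j. Xf P I x c j \<and> \<not> Gf c k j))"
definition Rf where "Rf P I x c = (\<lambda>k. if \<not> inI I (Sf P I x c) then Sf P I x c k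
   else Xf P I x c k \<and> \<not> Sf P I x c k)"
definition Of where "Of P I x c = (\<lambda>k. if infinite (set_of (Rf P I x c)) then Rf P I x c k else x k)"

lemma Of_meas:
  fixes P :: "(nat \<Rightarrow> nat \<Rightarrow> bool) \<Rightarrow> (nat \<Rightarrow> bool)"
  assumes PI: "chi ` I \<in> sets borel" and Pm: "P \<in> borel_measurable borel"
  shows "(\<lambda>w::(nat \<Rightarrow> bool) \<times> (nat \<Rightarrow> nat \<Rightarrow> bool). Of P I (fst w) (snd w)) \<in> borel_measurable borel"
proof -
  let ?M = "borel :: ((nat \<Rightarrow> bool) \<times> (nat \<Rightarrow> nat \<Rightarrow> bool)) measure"
  have px[measurable]: "\<And>i. Measurable.pred ?M (\<lambda>w. fst w i)"
    by (rule coord_pred[OF fst_m])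
  have pc[measurable]: "\<And>n k. Measurable.pred ?M (\<lambda>w. snd w n k)"
    by (rule coord_pred[OF coord2[OF snd_m]])
  have pg[measurable]: "\<And>n k. Measurable.pred ?M (\<lambda>w. Gf (snd w) n k)"
    unfolding Gf_def by measurable
  have cs: "(\<lambda>w. Cs I (fst w) (snd w) n) \<in> borel_measurable ?M" for n
  proof (induction n)
    case 0
    then show ?case using fst_m by simp
  next
    case (Suc n)
    have [measurable]: "\<And>k. Measurable.pred ?M (\<lambda>w. Cs I (fst w) (snd w) n k)"
      by (rule coord_pred[OF Suc])
    have m1: "(\<lambda>w k. Cs I (fst w) (snd w) n k \<and> Gf (snd w) n k) \<in> borel_measurable ?M"
      by (rule pred_coord) measurable
    have [measurable]: "Measurable.pred ?M (\<lambda>w. inI I (\<lambda>k. Cs I (fst w) (snd w) n k \<and> Gf (snd w) n k))"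
      by (rule pred_inI[OF PI m1])
    show ?case
      by (rule pred_coord) (simp only: Cs.simps, measurable)
  qed
  have cs2: "(\<lambda>w. Cs I (fst w) (snd w)) \<in> borel_measurable ?M"
    by (rule fun2) (rule cs)
  have pcs: "(\<lambda>w. P (Cs I (fst w) (snd w))) \<in> borel_measurable ?M"
    using measurable_compose[OF cs2 Pm] by (simp add: o_def)
  have [measurable]: "\<And>k. Measurable.pred ?M (\<lambda>w. P (Cs I (fst w) (snd w)) k)"
    by (rule coord_pred[OF pcs])
  have [measurable]: "\<And>k. Measurable.pred ?M (\<lambda>w. Xf P I (fst w) (snd w) k)"
    unfolding Xf_def by measurable
  have [measurable]: "\<And>k. Measurable.pred ?M (\<lambda>w. inI I (\<lambda>j. Xf P I (fst w) (snd w) j \<and> \<not> Gf (snd w) k j))"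
    by (rule pred_inI[OF PI], rule pred_coord) measurable
  have [measurable]: "\<And>k. Measurable.pred ?M (\<lambda>w. Sf P I (fst w) (snd w) k)"
    unfolding Sf_def by measurable
  have sm: "(\<lambda>w. Sf P I (fst w) (snd w)) \<in> borel_measurable ?M"
    by (rule pred_coord) measurable
  have [measurable]: "Measurable.pred ?M (\<lambda>w. inI I (Sf P I (fst w) (snd w)))"
    by (rule pred_inI[OF PI sm])
  have [measurable]: "\<And>k. Measurable.pred ?M (\<lambda>w. Rf P I (fst w) (snd w) k)"
    unfolding Rf_def by measurable
  have rm: "(\<lambda>w. Rf P I (fst w) (snd w)) \<in> borel_measurable ?M"
    by (rule pred_coord) measurable
  have [measurable]: "Measurable.pred ?M (\<lambda>w. infinite (set_of (Rf P I (fst w) (snd w))))"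
    by (rule pred_inf[OF rm])
  show ?thesis
    by (rule pred_coord) (unfold Of_def, measurable)
qed

lemma set_of_eq: "set_of (\<lambda>k. Q k) = {k. Q k}"
  by (simp add: set_of_def)

lemma ideal_sub: "is_ideal I \<Longrightarrow> B \<in> I \<Longrightarrow> C \<subseteq> B \<Longrightarrow> C \<in> I"
  unfolding is_ideal_def by blast
lemma ideal_un: "is_ideal I \<Longrightarrow> B \<in> I \<Longrightarrow> C \<in> I \<Longrightarrow> B \<union> C \<in> I"
  unfolding is_ideal_def by blast

lemma Cs_step:
  assumes id: "is_ideal I" and pos: "set_of (Cs I x c n) \<notin> I"
  shows "set_of (Cs I x c (Suc n)) \<notin> I \<and> set_of (Cs I x c (Suc n)) \<subseteq> set_of (Cs I x c n)
    \<and> (set_of (Cs I x c (Suc n)) \<subseteq> {k. Gf c n k} \<or> set_of (Cs I x c (Suc n)) \<inter> {k. Gf c n k} = {})"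
proof (cases "inI I (\<lambda>k. Cs I x c n k \<and> Gf c n k)")
  case True
  let ?C = "Cs I x c n"
  have "inI I (\<lambda>k. ?C k \<and> \<not> Gf c n k) \<Longrightarrow> False"
  proof -
    assume h: "inI I (\<lambda>k. ?C k \<and> \<not> Gf c n k)"
    have "set_of ?C \<subseteq> set_of (\<lambda>k. ?C k \<and> Gf c n k) \<union> set_of (\<lambda>k. ?C k \<and> \<not> Gf c n k)"
      by (auto simp: set_of_def)
    then show False using ideal_un[OF id] ideal_sub[OF id] True h pos unfolding inI_def by blast
  qed
  then show ?thesis using True pos
    by (simp only: Cs.simps, auto simp: set_of_def inI_def)
next
  case False
  then show ?thesis using pos by (simp only: Cs.simps, auto simp: set_of_def inI_def)
qed

lemma Cs_pos:
  assumes id: "is_ideal I" and A: "set_of x \<notin> I"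
  shows "set_of (Cs I x c n) \<notin> I"
  by (induction n) (use A Cs_step[OF id] in auto)

lemma colour_sym: "colour c m n = colour c n m"
  unfolding colour_def by auto

lemma colour_lt: "m < n \<Longrightarrow> colour c m n = of_bool (c m n)"
  unfolding colour_def by auto

theorem lemma5p2:
  fixes I :: "nat set set"
  assumes "borel_ideal I"
    and "fin_in I"
    and "uniformly_weakly_Pplus I"
  shows "uniformly_weakly_Ramsey I"
proof -
  have id: "is_ideal I" and PI: "chi ` I \<in> sets borel"
    using assms(1) unfolding borel_ideal_def by auto
  have fin: "\<And>F. finite F \<Longrightarrow> F \<in> I" using assms(2) unfolding fin_in_def by blast
  obtain P where Pm: "P \<in> borel_measurable borel" and Pp: "\<forall>A. (\<forall>n. A n \<notin> I) \<and> (\<forall>n. A (Suc n) \<subseteq> A n) \<longrightarrow>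
            set_of (P (\<lambda>n. chi (A n))) \<notin> I \<and>
            (\<forall>n. subset_mod I (set_of (P (\<lambda>n. chi (A n)))) (A n))"
    using assms(3) unfolding uniformly_weakly_Pplus_def by blast
  define \<Phi> where "\<Phi> = (\<lambda>w::(nat\<Rightarrow>bool)\<times>(nat\<Rightarrow>nat\<Rightarrow>bool). Of P I (fst w) (snd w))"
  have m: "\<Phi> \<in> restrict_space borel ({x. infinite (set_of x)} \<times> UNIV) \<rightarrow>\<^sub>M borel"
    unfolding \<Phi>_def by (rule measurable_restrict_space1) (rule Of_meas[OF PI Pm])
  have inf: "infinite (set_of (\<Phi> (x, c)))" if "infinite (set_of x)" for x c
  proof (cases "infinite (set_of (Rf P I x c))")
    case True
    then have "\<Phi> (x, c) = Rf P I x c" unfolding \<Phi>_def Of_def by auto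
    then show ?thesis using True by simp
  next
    case False
    then have "\<Phi> (x, c) = x" unfolding \<Phi>_def Of_def by auto
    then show ?thesis using that by simp
  qed
  have main: "set_of (\<Phi> (chi A, c)) \<subseteq> A \<and> set_of (\<Phi> (chi A, c)) \<notin> I \<and>
            (zero_homogeneous c (set_of (\<Phi> (chi A, c))) \<or>
             nowhere_zero_homogeneous I c (set_of (\<Phi> (chi A, c))))"
    if A: "A \<notin> I" and sa: "subadditive c" for A c
  proof -
    define Cq where "Cq = Cs I (chi A) c"
    have posC: "\<forall>n. set_of (Cq n) \<notin> I" unfolding Cq_def using Cs_pos[OF id] A by simp
    have step: "set_of (Cq (Suc n)) \<subseteq> set_of (Cq n) \<and> (set_of (Cq (Suc n)) \<subseteq> {k. Gf c n k} \<or> set_of (Cq (Suc n)) \<inter> {k. Gf c n k} = {})" for n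
      using Cs_step[OF id] posC unfolding Cq_def by blast
    have "(\<forall>n. set_of (Cq n) \<notin> I) \<and> (\<forall>n. set_of (Cq (Suc n)) \<subseteq> set_of (Cq n))"
      using posC step by blast
    from Pp[rule_format, OF this] have Xp: "set_of (P Cq) \<notin> I"
      and Xsub: "\<And>n. set_of (P Cq) - set_of (Cq n) \<in> I"
      by (simp_all add: subset_mod_def)
    define X where "X = set_of (P Cq) \<inter> A"
    have XA: "X \<subseteq> A" unfolding X_def by blast
    have Xeq: "{j. Xf P I (chi A) c j} = X"
      unfolding Xf_def X_def Cq_def by (auto simp: set_of_def chi_def)
    have Xsub2: "X - set_of (Cq n) \<in> I" for n
      by (rule ideal_sub[OF id Xsub[of n]]) (auto simp: X_def)
    have C0: "set_of (Cq 0) = A" unfolding Cq_def by simp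
    have Xpos: "X \<notin> I"
    proof
      assume "X \<in> I"
      moreover have "set_of (P Cq) \<subseteq> X \<union> (set_of (P Cq) - set_of (Cq 0))" using C0 X_def by blast
      ultimately show False using Xp Xsub[of 0] ideal_un[OF id] ideal_sub[OF id] by blast
    qed
    define S where "S = {k \<in> A. X - {j. Gf c k j} \<in> I}"
    have Seq: "{k. Sf P I (chi A) c k} = S"
    proof -
      have "\<And>k. set_of (\<lambda>j. Xf P I (chi A) c j \<and> \<not> Gf c k j) = X - {j. Gf c k j}"
        using Xeq by (auto simp: set_of_def)
      then show ?thesis unfolding Sf_def S_def by (auto simp: inI_def chi_def)
    qed
    have Sgood: "X \<inter> {j. Gf c k j} \<in> I" if "k \<in> A" "k \<notin> S" for k
    proof -
      have "set_of (Cq (Suc k)) \<subseteq> {j. Gf c k j} \<or> set_of (Cq (Suc k)) \<inter> {j. Gf c k j} = {}"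
        using step[of k] by blast
      then show ?thesis
    proof
      assume h: "set_of (Cq (Suc k)) \<subseteq> {j. Gf c k j}" 
      then have "X - {j. Gf c k j} \<subseteq> X - set_of (Cq (Suc k))" by blast
      then have "X - {j. Gf c k j} \<in> I" using ideal_sub[OF id Xsub2] by blast
      then show ?thesis using that unfolding S_def by blast
    next
      assume "set_of (Cq (Suc k)) \<inter> {j. Gf c k j} = {}"
      then have "X \<inter> {j. Gf c k j} \<subseteq> X - set_of (Cq (Suc k))" by blast
      then show ?thesis using ideal_sub[OF id Xsub2] by blast
    qed
    qed
    have clique_lt: "colour c m n = 0" if "m \<in> S" "n \<in> S" "m < n" for m n
    proof -
      have "X \<inter> {j. Gf c m j} \<inter> {j. Gf c n j} \<noteq> {}"
      proof
        assume e: "X \<inter> {j. Gf c m j} \<inter> {j. Gf c n j} = {}"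
        have "X \<subseteq> (X - {j. Gf c m j}) \<union> (X - {j. Gf c n j})" using e by blast
        moreover have "(X - {j. Gf c m j}) \<union> (X - {j. Gf c n j}) \<in> I"
          using that ideal_un[OF id] unfolding S_def by blast
        ultimately show False using Xpos ideal_sub[OF id] by blast
      qed
      then obtain k where k: "Gf c m k" "Gf c n k" by blast
      then have "m < k" "n < k" "\<not> c m k" "\<not> c n k" unfolding Gf_def by auto
      moreover have "colour c m n \<le> colour c m k + colour c n k"
        using sa that \<open>n < k\<close> unfolding subadditive_def by blast
      ultimately show ?thesis using colour_lt by simp
    qed
    have clique: "zero_homogeneous c S"
      unfolding zero_homogeneous_def
    proof (intro ballI impI)
      fix m n assume "m \<in> S" "n \<in> S" "m \<noteq> n"
      then show "colour c m n = 0"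
        using clique_lt colour_sym by (metis linorder_neqE_nat)
    qed
    show ?thesis
    proof (cases "S \<in> I")
      case False
      have R: "Rf P I (chi A) c = Sf P I (chi A) c"
        unfolding Rf_def using False Seq by (auto simp: inI_def set_of_def)
      have "infinite S" using False fin by blast
      then have "\<Phi> (chi A, c) = Sf P I (chi A) c"
        unfolding \<Phi>_def Of_def using R Seq by (auto simp: set_of_def)
      then have "set_of (\<Phi> (chi A, c)) = S" using Seq by (simp add: set_of_def)
      then show ?thesis using False clique S_def by auto
    next
      case True
      define Y where "Y = X - S"
      have R: "set_of (Rf P I (chi A) c) = Y"
        unfolding Rf_def Y_def using True Seq Xeq by (auto simp: inI_def set_of_def)
      have Ypos: "Y \<notin> I"
      proof
        assume "Y \<in> I"
        then have "Y \<union> S \<in> I" using True ideal_un[OF id] by blast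
        moreover have "X \<subseteq> Y \<union> S" unfolding Y_def by blast
        ultimately show False using Xpos ideal_sub[OF id] by blast
      qed
      then have "infinite Y" using fin by blast
      then have "\<Phi> (chi A, c) = Rf P I (chi A) c"
        unfolding \<Phi>_def Of_def using R by auto
      then have Phi: "set_of (\<Phi> (chi A, c)) = Y" using R by simp
      have nz: "nowhere_zero_homogeneous I c Y"
        unfolding nowhere_zero_homogeneous_def
      proof (intro allI impI)
        fix B assume B: "B \<subseteq> Y \<and> B \<notin> I"
        show "\<exists>m\<in>B. \<exists>n\<in>B. m \<noteq> n \<and> colour c m n = 1"
        proof (rule ccontr)
          assume no: "\<not> (\<exists>m\<in>B. \<exists>n\<in>B. m \<noteq> n \<and> colour c m n = 1)"
          have "B \<noteq> {}" using B fin by auto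
          define h where "h = (LEAST h. h \<in> B)"
          have hB: "h \<in> B" unfolding h_def using \<open>B \<noteq> {}\<close> by (metis LeastI ex_in_conv)
          have hmin: "\<And>n. n \<in> B \<Longrightarrow> h \<le> n" unfolding h_def by (rule Least_le)
          have sub: "B \<subseteq> {h} \<union> (X \<inter> {j. Gf c h j})"
          proof
            fix n assume n: "n \<in> B"
            show "n \<in> {h} \<union> (X \<inter> {j. Gf c h j})"
            proof (cases "n = h")
              case False
              then have "h < n" using hmin[OF n] by simp
              moreover have "colour c h n \<noteq> 1" using no n hB False by metis
              ultimately have "Gf c h n" unfolding Gf_def using colour_lt by auto
              moreover have "n \<in> X" using n B Y_def by blast
              ultimately show ?thesis by blast
            qed simp
          qed
          have "h \<in> A" "h \<notin> S" using hB B XA Y_def by auto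
          then have "X \<inter> {j. Gf c h j} \<in> I" by (rule Sgood)
          moreover have "{h} \<in> I" using fin by simp
          ultimately have "{h} \<union> (X \<inter> {j. Gf c h j}) \<in> I" using ideal_un[OF id] by blast
          then show False using sub B ideal_sub[OF id] by blast
        qed
      qed
      show ?thesis using Phi Ypos nz XA Y_def by auto
    qed
  qed
  show ?thesis
    unfolding uniformly_weakly_Ramsey_def
    using m inf main by blast
qed

end
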